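(* Let $L\in\mathbb{N}$, $\alpha>0$, and let $R_1,\dots,R_L$ be independent random variables where $R_\ell$ has PDF $$f_{R_\ell}(r)=\alpha\exp\Big(-\frac{r^\alpha}{\hat r_\ell^\alpha}\Big)\sum_{i=0}^\infty\frac{\varphi_{i,\ell}\,r^{\alpha(i+T_\ell)-1}}{\hat r_\ell^{\alpha(i+T_\ell)}\Gamma(i+T_\ell)},\qquad r\ge0,$$ with $T_\ell,\hat r_\ell>0$ and $\varphi_{i,\ell}\in\mathbb{R}$. Let $R=\sum_{\ell=1}^LR_\ell$. Define, for $i\ge0$, $$\lambda_{i,\ell}=\frac{\Gamma(\alpha(i+T_\ell))}{\hat r_\ell^{\alpha i}}\sum_{j=0}^i\frac{(-1)^{i-j}\varphi_{j,\ell}}{(i-j)!\,\Gamma(j+T_\ell)},$$ $\phi_{0,\ell}=\lambda_{1,\ell}/\lambda_{0,\ell}$, $\phi_{h,\ell}=\frac{1}{\lambda_{0,\ell}}\big[(h+1)\lambda_{h+1,\ell}-\sum_{t=1}^h\lambda_{t,\ell}\phi_{h-t,\ell}\big]$ for $h\ge1$, $\delta_0=\prod_{\ell=1}^L\lambda_{0,\ell}$ and $\delta_i=\frac1i\sum_{h=1}^i\delta_{i-h}\sum_{\ell=1}^L\phi_{h-1,\ell}$ for $i\ge1$. Then for $r\ge 0$ $$f_R(r)=\alpha^L\Big(\prod_{\ell=1}^L\hat r_\ell^{-\alpha T_\ell}\Big)\sum_{i=0}^\infty\frac{\delta_i\,r^{-1+\alpha i+\alpha\sum_{\ell}T_\ell}}{\Gamma(i\alpha+\alpha\sum_\ell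 T_\ell)},\qquad F_R(r)=\alpha^L\Big(\prod_{\ell=1}^L\hat r_\ell^{-\alpha T_\ell}\Big)\sum_{i=0}^\infty\frac{\delta_i\,r^{\alpha i+\alpha\sum_\ell T_\ell}}{\Gamma(1+i\alpha+\alpha\sum_\ell T_\ell)}.$$
   Context: $\Gamma$ is the gamma function; sums over $\ell$ run from $1$ to $L$. The given $f_{R_\ell}$ are assumed to be valid (absolutely convergent) probability densities; the $R_\ell$ need not be identically distributed. *)

theory Defs
  imports "HOL-Probability.Probability"
begin

text \<open>The coefficients lambda_{i,l}, for a single index l with parameters
  T = T_l, rh = hat r_l, ph = (\<lambda>j. varphi_{j,l}).\<close>
definition lam_coef :: "real \<Rightarrow> real \<Rightarrow> real \<Rightarrow> (nat \<Rightarrow> real) \<Rightarrow> nat \<Rightarrow> real" where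
  "lam_coef \<alpha> T rh ph i =
     Gamma (\<alpha> * (real i + T)) / rh powr (\<alpha> * real i) *
     (\<Sum>j\<le>i. (-1) ^ (i - j) * ph j / (fact (i - j) * Gamma (real j + T)))"

function phi_coef :: "(nat \<Rightarrow> real) \<Rightarrow> nat \<Rightarrow> real" where
  "phi_coef lam h =
     (if h = 0 then lam 1 / lam 0
      else (1 / lam 0) * (real (h + 1) * lam (h + 1) - (\<Sum>t=1..h. lam t * phi_coef lam (h - t))))"
  by auto
termination by (relation "Wellfounded.measure snd") auto

text \<open>delta_i given delta_0 = d0 and Phi h = sum over l of phi_{h,l}.\<close>
function delta_coef :: "real \<Rightarrow> (nat \<Rightarrow> real) \<Rightarrow> nat \<Rightarrow> real" where
  "delta_coef d0 Phi i =
     (if i = 0 then d0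
      else (1 / real i) * (\<Sum>h=1..i. delta_coef d0 Phi (i - h) * Phi (h - 1)))"
  by auto
termination by (relation "Wellfounded.measure (\<lambda>(_, _, i). i)") auto

definition pdf_l :: "real \<Rightarrow> real \<Rightarrow> real \<Rightarrow> (nat \<Rightarrow> real) \<Rightarrow> real \<Rightarrow> real" where
  "pdf_l \<alpha> T rh ph r =
     \<alpha> * exp (- (r powr \<alpha>) / (rh powr \<alpha>)) *
     (\<Sum>i. ph i * r powr (\<alpha> * (real i + T) - 1) / (rh powr (\<alpha> * (real i + T)) * Gamma (real i + T)))"

end

theory Submission
  imports Defs "HOL-Computational_Algebra.Formal_Power_Series"
begin

declare phi_coef.simps[simp del] delta_coef.simps[simp del]

lemma phi_fps:
  fixes lam :: "nat \<Rightarrow> real"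
  assumes "lam 0 \<noteq> 0"
  shows "fps_deriv (Abs_fps lam) = Abs_fps lam * Abs_fps (phi_coef lam)"
proof (rule fps_ext)
  fix n
  have "fps_nth (Abs_fps lam * Abs_fps (phi_coef lam)) n = (\<Sum>i=0..n. lam i * phi_coef lam (n - i))"
    by (simp add: fps_mult_nth)
  also have "\<dots> = lam 0 * phi_coef lam n + (\<Sum>i=1..n. lam i * phi_coef lam (n - i))"
    by (simp add: sum.atLeast_Suc_atMost)
  also have "\<dots> = of_nat (n+1) * lam (n+1)"
  proof (cases "n = 0")
    case True
    have "phi_coef lam 0 = lam 1 / lam 0" by (subst phi_coef.simps) simp
    then show ?thesis using assms True by simp
  next
    case False
    have "phi_coef lam n = (1 / lam 0) * (real (n + 1) * lam (n + 1) - (\<Sum>t=1..n. lam t * phi_coef lam (n - t)))"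
      using False by (subst phi_coef.simps) simp
    then show ?thesis using assms by (simp add: field_simps)
  qed
  finally show "fps_nth (fps_deriv (Abs_fps lam)) n = fps_nth (Abs_fps lam * Abs_fps (phi_coef lam)) n"
    by (simp add: fps_deriv_nth)
qed

lemma deriv_prod_fps:
  fixes F P :: "nat \<Rightarrow> real fps"
  assumes "finite I" "\<forall>l\<in>I. fps_deriv (F l) = F l * P l"
  shows "fps_deriv (\<Prod>l\<in>I. F l) = (\<Prod>l\<in>I. F l) * (\<Sum>l\<in>I. P l)"
  using assms
proof (induction I rule: finite_induct)
  case empty then show ?case by simp
next
  case (insert x I)
  then show ?case by (simp add: fps_deriv_mult algebra_simps)
qed

lemma prod_fps_nth0:
  fixes F :: "nat \<Rightarrow> real fps"
  assumes "finite I"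
  shows "fps_nth (\<Prod>l\<in>I. F l) 0 = (\<Prod>l\<in>I. fps_nth (F l) 0)"
  using assms by (induction I rule: finite_induct) (auto simp: fps_mult_nth_0)

lemma coef_rec_fps:
  fixes D S :: "real fps"
  assumes "fps_deriv D = D * S" "i > 0"
  shows "fps_nth (D) i = (1 / real i) * (\<Sum>h=1..i. fps_nth (D) (i - h) * fps_nth (S) (h - 1))"
proof -
  have "real i * fps_nth (D) i = fps_nth (fps_deriv D) (i - 1)"
    using assms(2) by (simp add: fps_deriv_nth)
  also have "\<dots> = (\<Sum>k=0..i-1. fps_nth (D) k * fps_nth (S) (i - 1 - k))"
    using assms(1) by (simp add: fps_mult_nth)
  also have "\<dots> = (\<Sum>h=1..i. fps_nth (D) (i - h) * fps_nth (S) (h - 1))"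
    by (rule sum.reindex_bij_witness[of _ "\<lambda>h. i - h" "\<lambda>k. i - k"]) (use assms(2) in auto)
  finally show ?thesis using assms(2) by (simp add: field_simps)
qed

lemma delta_fps_aux:
  fixes D S :: "real fps"
  assumes "fps_deriv D = D * S" "fps_nth D 0 = d0"
  shows "fps_nth D i = delta_coef d0 (\<lambda>h. fps_nth S h) i"
proof (induction i rule: less_induct)
  case (less i)
  show ?case
  proof (cases "i = 0")
    case True then show ?thesis using assms(2) by (simp add: delta_coef.simps[of _ _ 0])
  next
    case False
    have IH: "\<And>h. h \<in> {1..i} \<Longrightarrow> fps_nth D (i - h) = delta_coef d0 (\<lambda>h. fps_nth S h) (i - h)"
      using less False by auto
    have "fps_nth D i = (1 / real i) * (\<Sum>h=1..i. fps_nth D (i - h) * fps_nth S (h - 1))"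
      using coef_rec_fps[OF assms(1)] False by simp
    also have "\<dots> = (1 / real i) * (\<Sum>h=1..i. delta_coef d0 (\<lambda>h. fps_nth S h) (i - h) * fps_nth S (h - 1))"
      using IH by (intro arg_cong[where f="\<lambda>x. _ * x"] sum.cong) (simp_all only:)
    also have "\<dots> = delta_coef d0 (\<lambda>h. fps_nth S h) i"
    proof -
      have e: "delta_coef d0 (\<lambda>h. fps_nth S h) i = (if i = 0 then d0
          else (1 / real i) * (\<Sum>h=1..i. delta_coef d0 (\<lambda>h. fps_nth S h) (i - h) * fps_nth S (h - 1)))"
        by (rule delta_coef.simps)
      show ?thesis using False by (simp only: e if_False)
    qed
    finally show ?thesis .
  qed
qed

lemma delta_fps:
  fixes D S :: "real fps"
  assumes "fps_deriv D = D * S"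
  shows "fps_nth D i = delta_coef (fps_nth D 0) (\<lambda>h. fps_nth S h) i"
  using delta_fps_aux[OF assms refl] .

lemma beta_conv_nn:
  fixes p q x :: real
  assumes p: "p > 0" and q: "q > 0" and x: "x > 0"
  shows "(\<integral>\<^sup>+y. ennreal ((x - y) powr (p - 1) * y powr (q - 1) * indicator {0..x} y) \<partial>lborel)
         = ennreal (x powr (p + q - 1) * Beta p q)"
proof -
  have B: "(\<integral>\<^sup>+t. ennreal (t powr (q - 1) * (1 - t) powr (p - 1)) * indicator {0..1} t \<partial>lborel) = ennreal (Beta p q)"
    using nn_integral_has_integral_lebesgue'[OF _ has_integral_Beta_real[OF q p]]
    by (simp add: Beta_commute)
  have "(\<integral>\<^sup>+y. ennreal ((x - y) powr (p - 1) * y powr (q - 1) * indicator {0..x} y) \<partial>lborel)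
     = ennreal x * (\<integral>\<^sup>+t. ennreal ((x - x * t) powr (p - 1) * (x * t) powr (q - 1) * indicator {0..x} (x * t)) \<partial>lborel)"
    using x by (subst nn_integral_real_affine[where c=x and t=0]) auto
  also have "(\<integral>\<^sup>+t. ennreal ((x - x * t) powr (p - 1) * (x * t) powr (q - 1) * indicator {0..x} (x * t)) \<partial>lborel)
      = (\<integral>\<^sup>+t. ennreal (x powr (p - 1) * x powr (q - 1)) * (ennreal (t powr (q - 1) * (1 - t) powr (p - 1)) * indicator {0..1} t) \<partial>lborel)"
  proof (intro nn_integral_cong)
    fix t :: real
    show "ennreal ((x - x * t) powr (p - 1) * (x * t) powr (q - 1) * indicator {0..x} (x * t))
       = ennreal (x powr (p - 1) * x powr (q - 1)) * (ennreal (t powr (q - 1) * (1 - t) powr (p - 1)) * indicator {0..1} t)"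
    proof (cases "t \<in> {0..1}")
      case True
      then have "x * t \<in> {0..x}" using x by (auto simp: mult_le_cancel_left1)
      moreover have "(x - x * t) powr (p - 1) = x powr (p - 1) * (1 - t) powr (p - 1)"
        using True x by (subst powr_mult[symmetric]) (auto simp: algebra_simps)
      moreover have "(x * t) powr (q - 1) = x powr (q - 1) * t powr (q - 1)"
        using True x by (subst powr_mult) auto
      ultimately show ?thesis using True x
        by (simp add: ennreal_mult'[symmetric] mult_ac)
    next
      case False
      then have "x * t \<notin> {0..x}" using x
        by (auto simp: zero_le_mult_iff mult_le_cancel_left1)
      then show ?thesis using False by simp
    qed
  qed
  also have "\<dots> = ennreal (x powr (p - 1) * x powr (q - 1)) * ennreal (Beta p q)"
    by (subst nn_integral_cmult) (auto simp: B)
  also have "ennreal x * (ennreal (x powr (p - 1) * x powr (q - 1)) * ennreal (Beta p q))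
      = ennreal (x powr (p + q - 1) * Beta p q)"
  proof -
    have "x * (x powr (p - 1) * x powr (q - 1)) = x powr (p + q - 1)"
      using x by (simp add: powr_add[symmetric] powr_mult_base)
    moreover have "Beta p q \<ge> 0" using p q by (simp add: Beta_def Gamma_real_pos less_imp_le)
    ultimately show ?thesis using x
      by (simp add: ennreal_mult'[symmetric] ennreal_mult[symmetric] mult.assoc[symmetric])
  qed
  finally show ?thesis .
qed

definition gterm :: "real \<Rightarrow> (nat \<Rightarrow> real) \<Rightarrow> real \<Rightarrow> real \<Rightarrow> nat \<Rightarrow> real" where
  "gterm \<alpha> a s r i = a i * r powr (\<alpha> * real i + s - 1) / Gamma (\<alpha> * real i + s)"

definition Gs :: "real \<Rightarrow> (nat \<Rightarrow> real) \<Rightarrow> real \<Rightarrow> real \<Rightarrow> real" where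
  "Gs \<alpha> a s r = (\<Sum>i. gterm \<alpha> a s r i)"

definition Pabs :: "real \<Rightarrow> (nat \<Rightarrow> real) \<Rightarrow> real \<Rightarrow> bool" where
  "Pabs \<alpha> a s = (\<forall>r>0. summable (\<lambda>i. \<bar>gterm \<alpha> a s r i\<bar>))"

definition cprod :: "(nat \<Rightarrow> real) \<Rightarrow> (nat \<Rightarrow> real) \<Rightarrow> nat \<Rightarrow> real" where
  "cprod a b n = (\<Sum>i\<le>n. a i * b (n - i))"

lemma gterm_zero [simp]: "gterm \<alpha> a s 0 i = 0"
  by (simp add: gterm_def)

lemma Gs_zero [simp]: "Gs \<alpha> a s 0 = 0"
  by (simp add: Gs_def)

lemma Gamma_pos_lin: "\<alpha> \<ge> 0 \<Longrightarrow> s > 0 \<Longrightarrow> Gamma (\<alpha> * real i + s) > 0"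
  by (intro Gamma_real_pos) (simp add: add_nonneg_pos)

lemma gterm_abs_bound:
  assumes "\<alpha> \<ge> 0" "s > 0" "0 < z" "z \<le> x"
  shows "\<bar>gterm \<alpha> a s z i\<bar> \<le> (\<bar>a i\<bar> * x powr (\<alpha> * real i) / Gamma (\<alpha> * real i + s)) * z powr (s - 1)"
proof -
  have G: "Gamma (\<alpha> * real i + s) > 0" using Gamma_pos_lin assms by blast
  have "z powr (\<alpha> * real i + s - 1) = z powr (\<alpha> * real i) * z powr (s - 1)"
    using powr_add[of z "\<alpha> * real i" "s - 1"] by (simp add: algebra_simps)
  moreover have "z powr (\<alpha> * real i) \<le> x powr (\<alpha> * real i)"
    using assms by (intro powr_mono2) auto
  moreover have "z powr (s - 1) \<ge> 0" by simp
  ultimately have m: "\<bar>a i\<bar> * z powr (\<alpha> * real i + s - 1) \<le> \<bar>a i\<bar> * x powr (\<alpha> * real i) * z powr (s - 1)"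
    by (simp add: mult.assoc mult_left_mono mult_right_mono)
  have "\<bar>gterm \<alpha> a s z i\<bar> = \<bar>a i\<bar> * z powr (\<alpha> * real i + s - 1) / Gamma (\<alpha> * real i + s)"
    using G by (simp add: gterm_def abs_mult)
  also have "\<dots> \<le> \<bar>a i\<bar> * x powr (\<alpha> * real i) * z powr (s - 1) / Gamma (\<alpha> * real i + s)"
    using G m by (intro divide_right_mono) auto
  finally show ?thesis by simp
qed

lemma K_summable:
  assumes "\<alpha> \<ge> 0" "s > 0" "Pabs \<alpha> a s" "x > 0"
  shows "summable (\<lambda>i. \<bar>a i\<bar> * x powr (\<alpha> * real i) / Gamma (\<alpha> * real i + s))"
proof -
  have "summable (\<lambda>i. \<bar>gterm \<alpha> a s x i\<bar> * x powr (1 - s))"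
    using assms by (intro summable_mult2) (auto simp: Pabs_def)
  moreover have "\<bar>gterm \<alpha> a s x i\<bar> * x powr (1 - s) = \<bar>a i\<bar> * x powr (\<alpha> * real i) / Gamma (\<alpha> * real i + s)" for i
  proof -
    have G: "Gamma (\<alpha> * real i + s) > 0" using Gamma_pos_lin assms by blast
    have "x powr (\<alpha> * real i + s - 1) * x powr (1 - s) = x powr (\<alpha> * real i)"
      by (simp add: powr_add[symmetric])
    then show ?thesis using G assms(4) by (simp add: gterm_def abs_mult)
  qed
  ultimately show ?thesis by simp
qed

lemma Gs_abs_bound:
  assumes "\<alpha> \<ge> 0" "s > 0" "Pabs \<alpha> a s" "0 < z" "z \<le> x"
  shows "(\<Sum>i. \<bar>gterm \<alpha> a s z i\<bar>) \<le> (\<Sum>i. \<bar>a i\<bar> * x powr (\<alpha> * real i) / Gamma (\<alpha> * real i + s)) * z powr (s - 1)"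
proof -
  have s1: "summable (\<lambda>i. \<bar>gterm \<alpha> a s z i\<bar>)" using assms by (auto simp: Pabs_def)
  have s2: "summable (\<lambda>i. \<bar>a i\<bar> * x powr (\<alpha> * real i) / Gamma (\<alpha> * real i + s))"
    using K_summable assms by auto
  have "(\<Sum>i. \<bar>gterm \<alpha> a s z i\<bar>) \<le> (\<Sum>i. (\<bar>a i\<bar> * x powr (\<alpha> * real i) / Gamma (\<alpha> * real i + s)) * z powr (s - 1))"
    using gterm_abs_bound[OF assms(1,2,4,5)] s1 s2 by (intro suminf_le summable_mult2) auto
  also have "\<dots> = (\<Sum>i. \<bar>a i\<bar> * x powr (\<alpha> * real i) / Gamma (\<alpha> * real i + s)) * z powr (s - 1)"
    using s2 by (rule suminf_mult2[symmetric])
  finally show ?thesis .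
qed

lemma kernel_int:
  fixes p q x :: real
  assumes p: "p > 0" and q: "q > 0" and x: "x > 0"
  shows "integrable lborel (\<lambda>y. (x - y) powr (p - 1) * y powr (q - 1) * indicator {0..x} y)"
    and "integral\<^sup>L lborel (\<lambda>y. (x - y) powr (p - 1) * y powr (q - 1) * indicator {0..x} y)
           = x powr (p + q - 1) * Beta p q"
proof -
  have B0: "Beta p q \<ge> 0" using p q by (simp add: Beta_def Gamma_real_pos less_imp_le)
  have "(\<integral>\<^sup>+y. ennreal ((x - y) powr (p - 1) * y powr (q - 1) * indicator {0..x} y) \<partial>lborel)
         = ennreal (x powr (p + q - 1) * Beta p q)"
    by (rule beta_conv_nn[OF p q x])
  then have "integrable lborel (\<lambda>y. (x - y) powr (p - 1) * y powr (q - 1) * indicator {0..x} y) \<and>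
     integral\<^sup>L lborel (\<lambda>y. (x - y) powr (p - 1) * y powr (q - 1) * indicator {0..x} y) = x powr (p + q - 1) * Beta p q"
    using B0 by (subst (asm) nn_integral_eq_integrable) auto
  then show "integrable lborel (\<lambda>y. (x - y) powr (p - 1) * y powr (q - 1) * indicator {0..x} y)"
    and "integral\<^sup>L lborel (\<lambda>y. (x - y) powr (p - 1) * y powr (q - 1) * indicator {0..x} y)
           = x powr (p + q - 1) * Beta p q" by auto
qed

lemma u_int:
  assumes a0: "\<alpha> \<ge> 0" and s: "s > 0" and t: "t > 0" and x: "x > 0"
  shows "integrable lborel (\<lambda>y. gterm \<alpha> a s (x - y) i * gterm \<alpha> b t y j * indicator {0..x} y)"
    and "integral\<^sup>L lborel (\<lambda>y. gterm \<alpha> a s (x - y) i * gterm \<alpha> b t y j * indicator {0..x} y)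
          = a i * b j * x powr (\<alpha> * real (i + j) + (s + t) - 1) / Gamma (\<alpha> * real (i + j) + (s + t))"
proof -
  define p where "p = \<alpha> * real i + s"
  define q where "q = \<alpha> * real j + t"
  have p: "p > 0" and q: "q > 0" using a0 s t by (auto simp: p_def q_def add_nonneg_pos)
  have Gp: "Gamma p > 0" and Gq: "Gamma q > 0" using p q by (auto intro: Gamma_real_pos)
  define c where "c = a i * b j / (Gamma p * Gamma q)"
  have eq: "(\<lambda>y. gterm \<alpha> a s (x - y) i * gterm \<alpha> b t y j * indicator {0..x} y)
       = (\<lambda>y. c * ((x - y) powr (p - 1) * y powr (q - 1) * indicator {0..x} y))"
    by (auto simp: gterm_def c_def p_def q_def fun_eq_iff)
  show "integrable lborel (\<lambda>y. gterm \<alpha> a s (x - y) i * gterm \<alpha> b t y j * indicator {0..x} y)"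
    unfolding eq using kernel_int(1)[OF p q x] by (rule integrable_mult_right)
  have pq: "p + q = \<alpha> * real (i + j) + (s + t)" by (simp add: p_def q_def algebra_simps)
  have "integral\<^sup>L lborel (\<lambda>y. gterm \<alpha> a s (x - y) i * gterm \<alpha> b t y j * indicator {0..x} y)
      = c * (x powr (p + q - 1) * Beta p q)"
    unfolding eq integral_mult_right_zero kernel_int(2)[OF p q x] ..
  also have "\<dots> = a i * b j * x powr (p + q - 1) / Gamma (p + q)"
    using Gp Gq by (simp add: c_def Beta_def field_simps)
  finally show "integral\<^sup>L lborel (\<lambda>y. gterm \<alpha> a s (x - y) i * gterm \<alpha> b t y j * indicator {0..x} y)
          = a i * b j * x powr (\<alpha> * real (i + j) + (s + t) - 1) / Gamma (\<alpha> * real (i + j) + (s + t))"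
    by (simp add: pq)
qed

lemma gterm_abs:
  assumes "\<alpha> \<ge> 0" "s > 0" "z \<ge> 0"
  shows "\<bar>gterm \<alpha> a s z i\<bar> = gterm \<alpha> (\<lambda>i. \<bar>a i\<bar>) s z i"
  using Gamma_pos_lin[OF assms(1,2), of i] assms(3) by (simp add: gterm_def abs_mult)

lemma gterm_nonneg_abs:
  assumes "\<alpha> \<ge> 0" "s > 0"
  shows "gterm \<alpha> (\<lambda>i. \<bar>a i\<bar>) s z i \<ge> 0"
  using Gamma_pos_lin[OF assms(1,2), of i] by (simp add: gterm_def)

lemma cauchy_partial_le:
  fixes p q :: "nat \<Rightarrow> real"
  assumes "\<And>i. p i \<ge> 0" "\<And>i. q i \<ge> 0" "summable p" "summable q"
  shows "(\<Sum>n<N. \<Sum>i\<le>n. p i * q (n - i)) \<le> suminf p * suminf q"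
proof -
  have sp: "summable (\<lambda>k. norm (p k))" and sq: "summable (\<lambda>k. norm (q k))"
    using assms by auto
  have "(\<Sum>n<N. \<Sum>i\<le>n. p i * q (n - i)) \<le> (\<Sum>n. \<Sum>i\<le>n. p i * q (n - i))"
    using summable_Cauchy_product[OF sp sq] assms
    by (intro sum_le_suminf) (auto intro!: sum_nonneg mult_nonneg_nonneg)
  also have "\<dots> = suminf p * suminf q"
    using Cauchy_product[OF sp sq] by simp
  finally show ?thesis .
qed

lemma key_conv:
  assumes a0: "\<alpha> \<ge> 0" and s: "s > 0" and t: "t > 0"
    and Pa: "Pabs \<alpha> a s" and Pb: "Pabs \<alpha> b t" and x: "x > 0"
  shows "integrable lborel (\<lambda>y. Gs \<alpha> a s (x - y) * Gs \<alpha> b t y * indicator {0..x} y)"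
    and "integral\<^sup>L lborel (\<lambda>y. Gs \<alpha> a s (x - y) * Gs \<alpha> b t y * indicator {0..x} y) = Gs \<alpha> (cprod a b) (s + t) x"
    and "summable (\<lambda>n. \<bar>gterm \<alpha> (cprod a b) (s + t) x n\<bar>)"
proof -
  define u where "u i j y = gterm \<alpha> a s (x - y) i * gterm \<alpha> b t y j * indicator {0..x} y" for i j y
  define ua where "ua i j y = gterm \<alpha> (\<lambda>i. \<bar>a i\<bar>) s (x - y) i * gterm \<alpha> (\<lambda>i. \<bar>b i\<bar>) t y j * indicator {0..x} y" for i j y
  define w where "w n y = (\<Sum>i\<le>n. u i (n - i) y)" for n y
  define wa where "wa n y = (\<Sum>i\<le>n. ua i (n - i) y)" for n y
  define c where "c n = gterm \<alpha> (cprod (\<lambda>i. \<bar>a i\<bar>) (\<lambda>i. \<bar>b i\<bar>)) (s + t) x n" for n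
  define Ka where "Ka = (\<Sum>i. \<bar>a i\<bar> * x powr (\<alpha> * real i) / Gamma (\<alpha> * real i + s))"
  define Kb where "Kb = (\<Sum>i. \<bar>b i\<bar> * x powr (\<alpha> * real i) / Gamma (\<alpha> * real i + t))"
  define F where "F y = Gs \<alpha> a s (x - y) * Gs \<alpha> b t y * indicator {0..x} y" for y
  define h where "h y = Ka * Kb * ((x - y) powr (s - 1) * y powr (t - 1) * indicator {0..x} y)" for y

  have abs_u: "\<bar>u i j y\<bar> = ua i j y" for i j y
  proof (cases "y \<in> {0..x}")
    case True then show ?thesis
      using gterm_abs[OF a0 s, of "x - y" a i] gterm_abs[OF a0 t, of y b j]
      by (simp add: u_def ua_def abs_mult)
  qed (simp add: u_def ua_def)
  have ua_nonneg: "ua i j y \<ge> 0" for i j y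
    by (metis abs_ge_zero abs_u)
  have int_u: "integrable lborel (u i j)" for i j
    unfolding u_def by (rule u_int[OF a0 s t x])
  have int_ua: "integrable lborel (ua i j)" for i j
    unfolding ua_def by (rule u_int[OF a0 s t x])
  have int_w: "integrable lborel (w n)" for n
    unfolding w_def using Bochner_Integration.integrable_sum[of "{..n}" lborel "\<lambda>i y. u i (n - i) y"] int_u by simp
  have int_wa: "integrable lborel (wa n)" for n
    unfolding wa_def using Bochner_Integration.integrable_sum[of "{..n}" lborel "\<lambda>i y. ua i (n - i) y"] int_ua by simp
  have real_split: "\<alpha> * real (i + (n - i)) = \<alpha> * real n" if "i \<le> n" for i n :: nat
    using that by simp
  have I_w: "integral\<^sup>L lborel (w n) = gterm \<alpha> (cprod a b) (s + t) x n" for n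
  proof -
    have "integral\<^sup>L lborel (w n) = (\<Sum>i\<le>n. integral\<^sup>L lborel (u i (n - i)))"
      unfolding w_def using int_u by (subst Bochner_Integration.integral_sum) auto
    also have "\<dots> = (\<Sum>i\<le>n. a i * b (n - i) * x powr (\<alpha> * real n + (s + t) - 1) / Gamma (\<alpha> * real n + (s + t)))"
      unfolding u_def using u_int(2)[OF a0 s t x] real_split by (intro sum.cong) auto
    also have "\<dots> = gterm \<alpha> (cprod a b) (s + t) x n"
      by (simp add: gterm_def cprod_def sum_distrib_right sum_divide_distrib)
    finally show ?thesis .
  qed
  have I_wa: "integral\<^sup>L lborel (wa n) = c n" for n
  proof -
    have "integral\<^sup>L lborel (wa n) = (\<Sum>i\<le>n. integral\<^sup>L lborel (ua i (n - i)))"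
      unfolding wa_def using int_ua by (subst Bochner_Integration.integral_sum) auto
    also have "\<dots> = (\<Sum>i\<le>n. \<bar>a i\<bar> * \<bar>b (n - i)\<bar> * x powr (\<alpha> * real n + (s + t) - 1) / Gamma (\<alpha> * real n + (s + t)))"
      unfolding ua_def using u_int(2)[OF a0 s t x] real_split by (intro sum.cong) auto
    also have "\<dots> = c n"
      by (simp add: c_def gterm_def cprod_def sum_distrib_right sum_divide_distrib)
    finally show ?thesis .
  qed
  have w_le: "\<bar>w n y\<bar> \<le> wa n y" for n y
    unfolding w_def wa_def abs_u[symmetric] by (rule sum_abs)
  have c_nonneg: "c n \<ge> 0" for n
    unfolding c_def gterm_def cprod_def using Gamma_pos_lin[OF a0, of "s + t" n] s t
    by (intro divide_nonneg_pos mult_nonneg_nonneg sum_nonneg) auto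
  have int_norm_w: "integral\<^sup>L lborel (\<lambda>y. norm (w n y)) \<le> c n" for n
  proof -
    have "integral\<^sup>L lborel (\<lambda>y. norm (w n y)) \<le> integral\<^sup>L lborel (wa n)"
      by (rule integral_mono) (use int_w int_wa w_le in auto)
    then show ?thesis using I_wa by simp
  qed

  have Ka0: "Ka \<ge> 0" unfolding Ka_def
    using K_summable[OF a0 s Pa x] Gamma_pos_lin[OF a0 s]
    by (intro suminf_nonneg) (auto intro!: divide_nonneg_pos)
  have Kb0: "Kb \<ge> 0" unfolding Kb_def
    using K_summable[OF a0 t Pb x] Gamma_pos_lin[OF a0 t]
    by (intro suminf_nonneg) (auto intro!: divide_nonneg_pos)
  have pt: "(\<lambda>n. w n y) sums F y \<and> summable (\<lambda>n. \<bar>w n y\<bar>) \<and> (\<forall>N. (\<Sum>n<N. wa n y) \<le> h y)" for y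
  proof (cases "y \<in> {0<..<x}")
    case True
    then have y0: "y > 0" and yx: "x - y > 0" by auto
    define A where "A i = gterm \<alpha> a s (x - y) i" for i
    define B where "B j = gterm \<alpha> b t y j" for j
    have sA: "summable (\<lambda>i. norm (A i))" using Pa yx by (simp add: Pabs_def A_def)
    have sB: "summable (\<lambda>i. norm (B i))" using Pb y0 by (simp add: Pabs_def B_def)
    have sA': "summable (\<lambda>i. norm (norm (A i)))" and sB': "summable (\<lambda>i. norm (norm (B i)))"
      using sA sB by simp_all
    have uAB: "u i j y = A i * B j" for i j using True by (simp add: u_def A_def B_def)
    have uaAB: "ua i j y = norm (A i) * norm (B j)" for i j
      using abs_u[of i j y] uAB by (simp add: abs_mult)
    have "(\<lambda>n. w n y) sums (suminf A * suminf B)"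
      unfolding w_def uAB by (rule Cauchy_product_sums[OF sA sB])
    moreover have "suminf A * suminf B = F y"
      using True by (simp add: F_def Gs_def A_def[abs_def] B_def[abs_def])
    moreover have "summable (\<lambda>n. \<bar>w n y\<bar>)"
    proof (rule summable_comparison_test'[where g="\<lambda>n. wa n y"])
      show "summable (\<lambda>n. wa n y)"
        unfolding wa_def uaAB by (rule summable_Cauchy_product[OF sA' sB'])
      show "norm \<bar>w n y\<bar> \<le> wa n y" for n using w_le by simp
    qed
    moreover have "(\<Sum>n<N. wa n y) \<le> h y" for N
    proof -
      have "(\<Sum>n<N. wa n y) \<le> (\<Sum>i. norm (A i)) * (\<Sum>i. norm (B i))"
        unfolding wa_def uaAB by (rule cauchy_partial_le) (use sA sB in auto)
      also have "\<dots> \<le> (Ka * (x - y) powr (s - 1)) * (Kb * y powr (t - 1))"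
      proof (rule mult_mono)
        show "(\<Sum>i. norm (A i)) \<le> Ka * (x - y) powr (s - 1)"
          unfolding A_def Ka_def real_norm_def using Gs_abs_bound[OF a0 s Pa yx] y0 by simp
        show "(\<Sum>i. norm (B i)) \<le> Kb * y powr (t - 1)"
          unfolding B_def Kb_def real_norm_def using Gs_abs_bound[OF a0 t Pb y0] True by simp
        show "0 \<le> Ka * (x - y) powr (s - 1)"
          using Ka0 by simp
        show "0 \<le> (\<Sum>i. norm (B i))" using suminf_nonneg[OF sB] by simp
      qed
      also have "\<dots> = h y" using True by (simp add: h_def)
      finally show ?thesis .
    qed
    ultimately show ?thesis by simp
  next
    case False
    then have "y \<notin> {0..x} \<or> y = 0 \<or> y = x" by auto
    then have u0: "u i j y = 0 \<and> ua i j y = 0" and F0: "F y = 0" for i j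
      by (auto simp: u_def ua_def F_def)
    have "h y \<ge> 0" using Ka0 Kb0 by (simp add: h_def)
    then show ?thesis using u0 F0 by (simp add: w_def wa_def)
  qed

  have int_h: "integrable lborel h"
    unfolding h_def using kernel_int(1)[OF s t x] by (rule integrable_mult_right)
  have sum_c: "summable c"
  proof (rule summableI_nonneg_bounded[where x="integral\<^sup>L lborel h"])
    show "0 \<le> c n" for n by (rule c_nonneg)
    show "sum c {..<N} \<le> integral\<^sup>L lborel h" for N
    proof -
      have "sum c {..<N} = integral\<^sup>L lborel (\<lambda>y. \<Sum>n<N. wa n y)"
        using int_wa I_wa by (subst Bochner_Integration.integral_sum) auto
      also have "\<dots> \<le> integral\<^sup>L lborel h"
        using int_wa int_h pt by (intro integral_mono Bochner_Integration.integrable_sum) auto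
      finally show ?thesis .
    qed
  qed
  have sum_nw: "summable (\<lambda>n. integral\<^sup>L lborel (\<lambda>y. norm (w n y)))"
  proof (rule summable_comparison_test'[OF sum_c])
    show "norm (integral\<^sup>L lborel (\<lambda>y. norm (w n y))) \<le> c n" for n
      using int_norm_w[of n] by (simp add: integral_nonneg_AE)
  qed
  have Fsum: "F y = (\<Sum>n. w n y)" for y
    using pt[of y] by (simp add: sums_iff)
  have AEs: "AE y in lborel. summable (\<lambda>n. norm (w n y))"
    using pt by simp
  have FF: "F = (\<lambda>y. \<Sum>n. w n y)" using Fsum by auto
  show "integrable lborel (\<lambda>y. Gs \<alpha> a s (x - y) * Gs \<alpha> b t y * indicator {0..x} y)"
    using integrable_suminf[OF int_w AEs sum_nw] FF by (simp add: F_def[abs_def])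
  have "integral\<^sup>L lborel F = (\<Sum>n. integral\<^sup>L lborel (w n))"
    unfolding FF by (rule integral_suminf[OF int_w AEs sum_nw])
  also have "\<dots> = Gs \<alpha> (cprod a b) (s + t) x"
    by (simp add: I_w Gs_def)
  finally show "integral\<^sup>L lborel (\<lambda>y. Gs \<alpha> a s (x - y) * Gs \<alpha> b t y * indicator {0..x} y) = Gs \<alpha> (cprod a b) (s + t) x"
    by (simp add: F_def[abs_def])
  show "summable (\<lambda>n. \<bar>gterm \<alpha> (cprod a b) (s + t) x n\<bar>)"
  proof (rule summable_comparison_test'[OF sum_c])
    fix n
    have G: "Gamma (\<alpha> * real n + (s + t)) > 0" using Gamma_pos_lin[OF a0] s t by simp
    have "\<bar>cprod a b n\<bar> \<le> cprod (\<lambda>i. \<bar>a i\<bar>) (\<lambda>i. \<bar>b i\<bar>) n"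
      unfolding cprod_def by (rule order_trans[OF sum_abs]) (simp add: abs_mult)
    then show "norm \<bar>gterm \<alpha> (cprod a b) (s + t) x n\<bar> \<le> c n"
      using G x by (auto simp: c_def gterm_def abs_mult intro!: divide_right_mono mult_right_mono)
  qed
qed

lemma (in prob_space) conv_step:
  assumes a0: "\<alpha> \<ge> 0" and s: "s > 0" and t: "t > 0"
    and Pa: "Pabs \<alpha> a s" and Pb: "Pabs \<alpha> b t"
    and X: "distributed M lborel X (\<lambda>r. ennreal (if 0 \<le> r then Gs \<alpha> a s r else 0))"
    and Y: "distributed M lborel Y (\<lambda>r. ennreal (if 0 \<le> r then Gs \<alpha> b t r else 0))"
    and na: "\<forall>r\<ge>0. Gs \<alpha> a s r \<ge> 0" and nb: "\<forall>r\<ge>0. Gs \<alpha> b t r \<ge> 0"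
    and ind: "indep_var borel X borel Y"
  shows "distributed M lborel (\<lambda>\<omega>. X \<omega> + Y \<omega>) (\<lambda>r. ennreal (if 0 \<le> r then Gs \<alpha> (cprod a b) (s + t) r else 0))"
    and "\<forall>r\<ge>0. Gs \<alpha> (cprod a b) (s + t) r \<ge> 0"
    and "Pabs \<alpha> (cprod a b) (s + t)"
proof -
  let ?f = "\<lambda>r. ennreal (if 0 \<le> r then Gs \<alpha> a s r else 0)"
  let ?g = "\<lambda>r. ennreal (if 0 \<le> r then Gs \<alpha> b t r else 0)"
  have pw: "?f (x - y) * ?g y = ennreal (Gs \<alpha> a s (x - y) * Gs \<alpha> b t y * indicator {0..x} y)" for x y
  proof (cases "y \<in> {0..x}")
    case True
    then show ?thesis using na nb by (simp add: ennreal_mult)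
  next
    case False
    then have "y < 0 \<or> x - y < 0" by auto
    then show ?thesis using False by auto
  qed
  have main: "(\<integral>\<^sup>+y. ?f (x - y) * ?g y \<partial>lborel) = ennreal (if 0 \<le> x then Gs \<alpha> (cprod a b) (s + t) x else 0)
        \<and> (0 \<le> x \<longrightarrow> Gs \<alpha> (cprod a b) (s + t) x \<ge> 0)" for x
  proof -
    consider "x < 0" | "x = 0" | "x > 0" by linarith
    then show ?thesis
    proof cases
      case 1
      then have e: "(\<lambda>y. ?f (x - y) * ?g y) = (\<lambda>_. 0)" by (simp add: pw fun_eq_iff)
      show ?thesis unfolding e using 1 by simp
    next
      case 2
      then have e: "(\<lambda>y. ?f (x - y) * ?g y) = (\<lambda>_. 0)"
        by (simp add: pw indicator_def fun_eq_iff)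
      show ?thesis unfolding e using 2 by simp
    next
      case 3
      let ?F = "\<lambda>y. Gs \<alpha> a s (x - y) * Gs \<alpha> b t y * indicator {0..x} y"
      have nF: "0 \<le> ?F y" for y
        using na nb by (auto simp: indicator_def)
      have "(\<integral>\<^sup>+y. ?f (x - y) * ?g y \<partial>lborel) = (\<integral>\<^sup>+y. ennreal (?F y) \<partial>lborel)"
        unfolding pw ..
      also have "\<dots> = ennreal (integral\<^sup>L lborel ?F)"
        using key_conv(1)[OF a0 s t Pa Pb 3] nF by (intro nn_integral_eq_integral) auto
      also have "integral\<^sup>L lborel ?F = Gs \<alpha> (cprod a b) (s + t) x"
        by (rule key_conv(2)[OF a0 s t Pa Pb 3])
      finally show ?thesis
        using 3 key_conv(2)[OF a0 s t Pa Pb 3] integral_nonneg_AE[of ?F lborel] nF by auto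
    qed
  qed
  have "distributed M lborel (\<lambda>\<omega>. X \<omega> + Y \<omega>) (\<lambda>x. \<integral>\<^sup>+y. ?f (x - y) * ?g y \<partial>lborel)"
    by (rule distributed_convolution[OF ind X Y])
  moreover have "(\<lambda>x. \<integral>\<^sup>+y. ?f (x - y) * ?g y \<partial>lborel) = (\<lambda>r. ennreal (if 0 \<le> r then Gs \<alpha> (cprod a b) (s + t) r else 0))"
    using main by auto
  ultimately show "distributed M lborel (\<lambda>\<omega>. X \<omega> + Y \<omega>) (\<lambda>r. ennreal (if 0 \<le> r then Gs \<alpha> (cprod a b) (s + t) r else 0))"
    by simp
  show "\<forall>r\<ge>0. Gs \<alpha> (cprod a b) (s + t) r \<ge> 0" using main by auto
  show "Pabs \<alpha> (cprod a b) (s + t)"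
    unfolding Pabs_def using key_conv(3)[OF a0 s t Pa Pb] by auto
qed

lemma cprod_fps: "cprod a (fps_nth P) = fps_nth (Abs_fps a * P)"
  by (simp add: fun_eq_iff cprod_def fps_mult_nth atLeast0AtMost)

lemma (in prob_space) sum_dist:
  fixes a :: "nat \<Rightarrow> nat \<Rightarrow> real" and s :: "nat \<Rightarrow> real" and R :: "nat \<Rightarrow> 'a \<Rightarrow> real"
  assumes a0: "\<alpha> \<ge> 0"
    and s: "\<forall>l\<in>{1..L}. s l > 0"
    and P: "\<forall>l\<in>{1..L}. Pabs \<alpha> (a l) (s l)"
    and D: "\<forall>l\<in>{1..L}. distributed M lborel (R l) (\<lambda>r. ennreal (if 0 \<le> r then Gs \<alpha> (a l) (s l) r else 0))"
    and N: "\<forall>l\<in>{1..L}. \<forall>r\<ge>0. Gs \<alpha> (a l) (s l) r \<ge> 0"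
    and I: "indep_vars (\<lambda>_. borel) R {1..L}"
  shows "1 \<le> n \<Longrightarrow> n \<le> L \<Longrightarrow>
    distributed M lborel (\<lambda>\<omega>. \<Sum>l=1..n. R l \<omega>)
       (\<lambda>r. ennreal (if 0 \<le> r then Gs \<alpha> (fps_nth (\<Prod>l=1..n. Abs_fps (a l))) (\<Sum>l=1..n. s l) r else 0))
    \<and> (\<forall>r\<ge>0. Gs \<alpha> (fps_nth (\<Prod>l=1..n. Abs_fps (a l))) (\<Sum>l=1..n. s l) r \<ge> 0)
    \<and> Pabs \<alpha> (fps_nth (\<Prod>l=1..n. Abs_fps (a l))) (\<Sum>l=1..n. s l)
    \<and> (\<Sum>l=1..n. s l) > 0"
proof (induction n)
  case 0 then show ?case by simp
next
  case (Suc n)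
  show ?case
  proof (cases "n = 0")
    case True
    then have e: "{1..Suc n} = {1::nat}" by auto
    have m: "(1::nat) \<in> {1..L}" using Suc.prems by auto
    have e2: "fps_nth (\<Prod>l\<in>{1::nat}. Abs_fps (a l)) = a 1" by (simp add: Abs_fps_inverse)
    have e3: "(\<Sum>l\<in>{1::nat}. s l) = s 1" by simp
    have e4: "(\<Sum>l\<in>{1::nat}. R l \<omega>) = R 1 \<omega>" for \<omega> by simp
    have e5: "(\<lambda>\<omega>. \<Sum>l\<in>{1::nat}. R l \<omega>) = R 1" by (simp add: fun_eq_iff)
    show ?thesis unfolding e e2 e3 e5 using m s P D N by blast
  next
    case False
    then have IH: "distributed M lborel (\<lambda>\<omega>. \<Sum>l=1..n. R l \<omega>)
       (\<lambda>r. ennreal (if 0 \<le> r then Gs \<alpha> (fps_nth (\<Prod>l=1..n. Abs_fps (a l))) (\<Sum>l=1..n. s l) r else 0))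
    \<and> (\<forall>r\<ge>0. Gs \<alpha> (fps_nth (\<Prod>l=1..n. Abs_fps (a l))) (\<Sum>l=1..n. s l) r \<ge> 0)
    \<and> Pabs \<alpha> (fps_nth (\<Prod>l=1..n. Abs_fps (a l))) (\<Sum>l=1..n. s l)
    \<and> (\<Sum>l=1..n. s l) > 0"
      using Suc by auto
    have m: "Suc n \<in> {1..L}" using Suc.prems by auto
    have ind: "indep_var borel (R (Suc n)) borel (\<lambda>\<omega>. \<Sum>l\<in>{1..n}. R l \<omega>)"
    proof (rule indep_vars_sum)
      show "finite {1..n}" by simp
      show "Suc n \<notin> {1..n}" by simp
      show "indep_vars (\<lambda>_. borel) R (insert (Suc n) {1..n})"
        using Suc.prems by (intro indep_vars_subset[OF I]) auto
    qed
    have C: "distributed M lborel (\<lambda>\<omega>. R (Suc n) \<omega> + (\<Sum>l=1..n. R l \<omega>))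
         (\<lambda>r. ennreal (if 0 \<le> r then Gs \<alpha> (cprod (a (Suc n)) (fps_nth (\<Prod>l=1..n. Abs_fps (a l)))) (s (Suc n) + (\<Sum>l=1..n. s l)) r else 0))
      \<and> (\<forall>r\<ge>0. Gs \<alpha> (cprod (a (Suc n)) (fps_nth (\<Prod>l=1..n. Abs_fps (a l)))) (s (Suc n) + (\<Sum>l=1..n. s l)) r \<ge> 0)
      \<and> Pabs \<alpha> (cprod (a (Suc n)) (fps_nth (\<Prod>l=1..n. Abs_fps (a l)))) (s (Suc n) + (\<Sum>l=1..n. s l))"
    proof -
      have sn: "s (Suc n) > 0" and Pn: "Pabs \<alpha> (a (Suc n)) (s (Suc n))"
        and Dn: "distributed M lborel (R (Suc n)) (\<lambda>r. ennreal (if 0 \<le> r then Gs \<alpha> (a (Suc n)) (s (Suc n)) r else 0))"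
        and Nn: "\<forall>r\<ge>0. Gs \<alpha> (a (Suc n)) (s (Suc n)) r \<ge> 0"
        using m s P D N by auto
      note cs = conv_step[OF a0 sn _ Pn _ Dn _ Nn _ ind]
      show ?thesis using cs[of "\<Sum>l=1..n. s l" "fps_nth (\<Prod>l=1..n. Abs_fps (a l))"] IH by simp
    qed
    have e1: "(\<Sum>l=1..Suc n. R l \<omega>) = R (Suc n) \<omega> + (\<Sum>l=1..n. R l \<omega>)" for \<omega>
      by (simp add: sum.cl_ivl_Suc)
    have e2: "(\<Sum>l=1..Suc n. s l) = s (Suc n) + (\<Sum>l=1..n. s l)"
      by (simp add: sum.cl_ivl_Suc)
    have e3: "fps_nth (\<Prod>l=1..Suc n. Abs_fps (a l)) = cprod (a (Suc n)) (fps_nth (\<Prod>l=1..n. Abs_fps (a l)))"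
      by (simp add: prod.cl_ivl_Suc cprod_fps mult.commute)
    have "s (Suc n) + (\<Sum>l=1..n. s l) > 0" using IH m s by (simp add: add_pos_pos)
    then show ?thesis unfolding e1 e2 e3 using C by simp
  qed
qed

lemma alg:
  fixes \<alpha> s R1 R2 H1 H2 H3 H4 G Gj f ph :: real
  assumes "H1 * H2 = H4 * H3" "H1 \<noteq> 0" "H2 \<noteq> 0" "H3 \<noteq> 0" "H4 \<noteq> 0" "G \<noteq> 0" "Gj \<noteq> 0" "f \<noteq> 0"
  shows "\<alpha> * (s * (R1 / H1) / f * (ph * R2 / (H2 * Gj))) = \<alpha> * (1 / H3) * (G / H4 * (s * ph / (f * Gj))) * (R1 * R2) / G"
proof -
  have "\<alpha> * (s * (R1 / H1) / f * (ph * R2 / (H2 * Gj))) = \<alpha> * s * ph * R1 * R2 / (f * Gj * (H1 * H2))"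
    using assms by (simp add: field_simps)
  also have "\<dots> = \<alpha> * s * ph * R1 * R2 / (f * Gj * (H4 * H3))" using assms(1) by simp
  also have "\<dots> = \<alpha> * (1 / H3) * (G / H4 * (s * ph / (f * Gj))) * (R1 * R2) / G"
    using assms by (simp add: field_simps)
  finally show ?thesis .
qed

lemma powr_pow_nat: "(r::real) > 0 \<Longrightarrow> (r powr \<alpha>) ^ k = r powr (\<alpha> * real k)"
  by (simp add: powr_realpow[symmetric] powr_powr)

lemma pdf_term:
  fixes \<alpha> T rh r :: real and ph :: "nat \<Rightarrow> real"
  assumes a: "\<alpha> > 0" and T: "T > 0" and rh: "rh > 0" and r: "r > 0" and j: "j \<le> n"
  shows "\<alpha> * (((- (r powr \<alpha> / rh powr \<alpha>)) ^ (n - j) / fact (n - j)) *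
            (ph j * r powr (\<alpha> * (real j + T) - 1) / (rh powr (\<alpha> * (real j + T)) * Gamma (real j + T))))
       = \<alpha> * rh powr (- \<alpha> * T) * (Gamma (\<alpha> * (real n + T)) / rh powr (\<alpha> * real n) *
            ((-1) ^ (n - j) * ph j / (fact (n - j) * Gamma (real j + T))))
         * r powr (\<alpha> * real n + \<alpha> * T - 1) / Gamma (\<alpha> * real n + \<alpha> * T)"
proof -
  define k where "k = n - j"
  have rk: "real k = real n - real j" using j by (simp add: k_def of_nat_diff)
  have u: "(- (r powr \<alpha> / rh powr \<alpha>)) ^ k = (-1) ^ k * (r powr (\<alpha> * real k) / rh powr (\<alpha> * real k))"
  proof -
    have "(- (r powr \<alpha> / rh powr \<alpha>)) ^ k = (-1) ^ k * (r powr \<alpha> / rh powr \<alpha>) ^ k"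
      by (rule power_minus)
    also have "(r powr \<alpha> / rh powr \<alpha>) ^ k = (r powr \<alpha>) ^ k / (rh powr \<alpha>) ^ k"
      by (rule power_divide)
    finally show ?thesis using r rh by (simp only: powr_pow_nat)
  qed
  have R: "r powr (\<alpha> * real k) * r powr (\<alpha> * (real j + T) - 1) = r powr (\<alpha> * real n + \<alpha> * T - 1)"
  proof -
    have e: "\<alpha> * real k + (\<alpha> * (real j + T) - 1) = \<alpha> * real n + \<alpha> * T - 1" by (simp add: rk algebra_simps)
    show ?thesis by (simp only: powr_add[symmetric] e)
  qed
  have H: "rh powr (\<alpha> * real k) * rh powr (\<alpha> * (real j + T)) = rh powr (\<alpha> * real n) * rh powr (\<alpha> * T)"
  proof -
    have "\<alpha> * real k + \<alpha> * (real j + T) = \<alpha> * real n + \<alpha> * T" by (simp add: rk algebra_simps)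
    then show ?thesis by (simp add: powr_add[symmetric])
  qed
  have Hm: "rh powr (- \<alpha> * T) = 1 / rh powr (\<alpha> * T)"
    by (simp add: powr_minus divide_inverse)
  have GG: "Gamma (\<alpha> * (real n + T)) = Gamma (\<alpha> * real n + \<alpha> * T)" by (simp add: algebra_simps)
  have Gn: "Gamma (\<alpha> * real n + \<alpha> * T) \<noteq> 0"
    using a T by (intro Gamma_real_pos[THEN less_imp_neq, symmetric]) (simp add: add_nonneg_pos)
  have Gj: "Gamma (real j + T) \<noteq> 0"
    using T by (intro Gamma_real_pos[THEN less_imp_neq, symmetric]) (simp add: add_nonneg_pos)
  have fk: "fact k \<noteq> (0::real)" by simp
  have "\<alpha> * (((- (r powr \<alpha> / rh powr \<alpha>)) ^ (n - j) / fact (n - j)) *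
            (ph j * r powr (\<alpha> * (real j + T) - 1) / (rh powr (\<alpha> * (real j + T)) * Gamma (real j + T))))
      = \<alpha> * ((-1) ^ k * (r powr (\<alpha> * real k) / rh powr (\<alpha> * real k)) / fact k *
            (ph j * r powr (\<alpha> * (real j + T) - 1) / (rh powr (\<alpha> * (real j + T)) * Gamma (real j + T))))"
    by (simp only: u k_def[symmetric])
  also have "\<dots> = \<alpha> * (1 / rh powr (\<alpha> * T)) * (Gamma (\<alpha> * real n + \<alpha> * T) / rh powr (\<alpha> * real n) *
            ((-1) ^ k * ph j / (fact k * Gamma (real j + T))))
         * (r powr (\<alpha> * real k) * r powr (\<alpha> * (real j + T) - 1)) / Gamma (\<alpha> * real n + \<alpha> * T)"
    by (rule alg[OF H]) (use rh Gn Gj fk in auto)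
  also have "\<dots> = \<alpha> * rh powr (- \<alpha> * T) * (Gamma (\<alpha> * (real n + T)) / rh powr (\<alpha> * real n) *
            ((-1) ^ (n - j) * ph j / (fact (n - j) * Gamma (real j + T))))
         * r powr (\<alpha> * real n + \<alpha> * T - 1) / Gamma (\<alpha> * real n + \<alpha> * T)"
    unfolding R Hm GG by (simp only: k_def)
  finally show ?thesis .
qed


lemma sum_factor:
  fixes c1 c2 c3 c4 :: real
  shows "(\<Sum>j\<in>A. c1 * (c2 * X j) * c3 / c4) = c1 * (c2 * sum X A) * c3 / c4"
proof -
  have "(\<Sum>j\<in>A. c1 * (c2 * X j) * c3 / c4) = (\<Sum>j\<in>A. (c1 * c2 * c3 / c4) * X j)"
    by (simp add: algebra_simps)
  also have "\<dots> = (c1 * c2 * c3 / c4) * sum X A" by (simp add: sum_distrib_left)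
  finally show ?thesis by simp
qed

lemma pdf_series:
  fixes \<alpha> T rh r :: real and ph :: "nat \<Rightarrow> real"
  assumes a: "\<alpha> > 0" and T: "T > 0" and rh: "rh > 0" and r: "r > 0"
    and S: "summable (\<lambda>i. \<bar>ph i * r powr (\<alpha> * (real i + T) - 1) / (rh powr (\<alpha> * (real i + T)) * Gamma (real i + T))\<bar>)"
  shows "pdf_l \<alpha> T rh ph r = Gs \<alpha> (\<lambda>i. \<alpha> * rh powr (- \<alpha> * T) * lam_coef \<alpha> T rh ph i) (\<alpha> * T) r"
    and "summable (\<lambda>i. \<bar>gterm \<alpha> (\<lambda>i. \<alpha> * rh powr (- \<alpha> * T) * lam_coef \<alpha> T rh ph i) (\<alpha> * T) r i\<bar>)"
proof -
  define p where "p j = ph j * r powr (\<alpha> * (real j + T) - 1) / (rh powr (\<alpha> * (real j + T)) * Gamma (real j + T))" for j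
  define x where "x = - (r powr \<alpha> / rh powr \<alpha>)"
  define e where "e k = x ^ k / fact k" for k
  define aa where "aa = (\<lambda>i. \<alpha> * rh powr (- \<alpha> * T) * lam_coef \<alpha> T rh ph i)"
  have eR: "e k = x ^ k /\<^sub>R fact k" for k by (simp add: e_def divide_inverse mult.commute)
  have se: "summable (\<lambda>k. norm (e k))" unfolding eR by (rule summable_norm_exp)
  have expe: "exp x = suminf e" unfolding eR using exp_converges[of x] by (simp add: sums_iff)
  have sp: "summable (\<lambda>k. norm (p k))" using S by (simp add: p_def)
  have trm: "\<alpha> * (\<Sum>k\<le>n. e k * p (n - k)) = gterm \<alpha> aa (\<alpha> * T) r n" for n
  proof -
    have "(\<Sum>k\<le>n. e k * p (n - k)) = (\<Sum>j\<le>n. e (n - j) * p j)"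
      by (rule sum.reindex_bij_witness[of _ "\<lambda>j. n - j" "\<lambda>k. n - k"]) auto
    then have "\<alpha> * (\<Sum>k\<le>n. e k * p (n - k)) = (\<Sum>j\<le>n. \<alpha> * (e (n - j) * p j))"
      by (simp add: sum_distrib_left)
    also have "\<dots> = (\<Sum>j\<le>n. \<alpha> * rh powr (- \<alpha> * T) * (Gamma (\<alpha> * (real n + T)) / rh powr (\<alpha> * real n) *
            ((-1) ^ (n - j) * ph j / (fact (n - j) * Gamma (real j + T))))
         * r powr (\<alpha> * real n + \<alpha> * T - 1) / Gamma (\<alpha> * real n + \<alpha> * T))"
      unfolding e_def p_def x_def by (intro sum.cong refl pdf_term[OF a T rh r]) auto
    also have "\<dots> = \<alpha> * rh powr (- \<alpha> * T) * (Gamma (\<alpha> * (real n + T)) / rh powr (\<alpha> * real n) *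
            (\<Sum>j\<le>n. (-1) ^ (n - j) * ph j / (fact (n - j) * Gamma (real j + T))))
         * r powr (\<alpha> * real n + \<alpha> * T - 1) / Gamma (\<alpha> * real n + \<alpha> * T)"
      by (rule sum_factor)
    also have "\<dots> = gterm \<alpha> aa (\<alpha> * T) r n"
      by (simp only: gterm_def aa_def lam_coef_def)
    finally show ?thesis .
  qed
  have sc: "summable (\<lambda>n. \<Sum>k\<le>n. e k * p (n - k))" by (rule summable_Cauchy_product[OF se sp])
  have e1: "(\<lambda>i. ph i * r powr (\<alpha> * (real i + T) - 1) / (rh powr (\<alpha> * (real i + T)) * Gamma (real i + T))) = p"
    by (rule ext) (simp only: p_def)
  have e2: "exp (- (r powr \<alpha>) / (rh powr \<alpha>)) = suminf e"
    using expe by (simp only: x_def minus_divide_left)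
  have "pdf_l \<alpha> T rh ph r = \<alpha> * (suminf e * suminf p)"
    by (simp only: pdf_l_def e1 e2 mult.assoc)
  also have "\<dots> = \<alpha> * (\<Sum>n. \<Sum>k\<le>n. e k * p (n - k))"
    by (simp add: Cauchy_product[OF se sp])
  also have "\<dots> = (\<Sum>n. \<alpha> * (\<Sum>k\<le>n. e k * p (n - k)))"
    by (rule suminf_mult[OF sc, symmetric])
  also have "\<dots> = Gs \<alpha> aa (\<alpha> * T) r" by (simp add: trm Gs_def)
  finally show "pdf_l \<alpha> T rh ph r = Gs \<alpha> (\<lambda>i. \<alpha> * rh powr (- \<alpha> * T) * lam_coef \<alpha> T rh ph i) (\<alpha> * T) r"
    by (simp add: aa_def)
  have se': "summable (\<lambda>k. norm (norm (e k)))" and sp': "summable (\<lambda>k. norm (norm (p k)))"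
    using se sp by simp_all
  have "summable (\<lambda>n. \<bar>gterm \<alpha> aa (\<alpha> * T) r n\<bar>)"
  proof (rule summable_comparison_test')
    show "summable (\<lambda>n. \<alpha> * (\<Sum>k\<le>n. norm (e k) * norm (p (n - k))))"
      by (rule summable_mult[OF summable_Cauchy_product[OF se' sp']])
    fix n
    have "norm \<bar>gterm \<alpha> aa (\<alpha> * T) r n\<bar> = \<alpha> * \<bar>\<Sum>k\<le>n. e k * p (n - k)\<bar>"
      using a by (simp add: trm[symmetric] abs_mult)
    also have "\<dots> \<le> \<alpha> * (\<Sum>k\<le>n. norm (e k) * norm (p (n - k)))"
      using a by (intro mult_left_mono order_trans[OF sum_abs]) (auto simp: abs_mult)
    finally show "norm \<bar>gterm \<alpha> aa (\<alpha> * T) r n\<bar> \<le> \<alpha> * (\<Sum>k\<le>n. norm (e k) * norm (p (n - k)))" .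
  qed
  then show "summable (\<lambda>i. \<bar>gterm \<alpha> (\<lambda>i. \<alpha> * rh powr (- \<alpha> * T) * lam_coef \<alpha> T rh ph i) (\<alpha> * T) r i\<bar>)"
    by (simp add: aa_def)
qed

lemma powr_kernel:
  fixes c r :: real
  assumes c: "c > 0" and r: "r \<ge> 0"
  shows "integrable lborel (\<lambda>x. x powr (c - 1) * indicator {0..r} x)"
    and "integral\<^sup>L lborel (\<lambda>x. x powr (c - 1) * indicator {0..r} x) = r powr c / c"
proof -
  have hi: "((\<lambda>x. x powr (c - 1)) has_integral r powr c / c) {0..r}"
    using has_integral_powr_from_0[of "c - 1" r] c r by simp
  have "(\<integral>\<^sup>+x\<in>{0..r}. ennreal (x powr (c - 1)) \<partial>lborel) = ennreal (r powr c / c)"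
    by (rule nn_integral_has_integral_lebesgue'[OF _ hi]) simp
  moreover have "(\<integral>\<^sup>+x\<in>{0..r}. ennreal (x powr (c - 1)) \<partial>lborel)
      = (\<integral>\<^sup>+x. ennreal (x powr (c - 1) * indicator {0..r} x) \<partial>lborel)"
    by (intro nn_integral_cong) (auto simp: indicator_def)
  ultimately have "(\<integral>\<^sup>+x. ennreal (x powr (c - 1) * indicator {0..r} x) \<partial>lborel) = ennreal (r powr c / c)"
    by simp
  then have "integrable lborel (\<lambda>x. x powr (c - 1) * indicator {0..r} x) \<and>
      integral\<^sup>L lborel (\<lambda>x. x powr (c - 1) * indicator {0..r} x) = r powr c / c"
    using c by (subst (asm) nn_integral_eq_integrable) auto
  then show "integrable lborel (\<lambda>x. x powr (c - 1) * indicator {0..r} x)"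
    and "integral\<^sup>L lborel (\<lambda>x. x powr (c - 1) * indicator {0..r} x) = r powr c / c" by auto
qed

lemma Gamma_plus1_pos: "(z::real) > 0 \<Longrightarrow> Gamma (z + 1) = z * Gamma z"
  by (rule Gamma_plus1) (auto dest: nonpos_Ints_nonpos)

lemma (in prob_space) cdf_series:
  fixes d :: "nat \<Rightarrow> real" and \<alpha> \<beta> C r :: real and S :: "'a \<Rightarrow> real"
  assumes a0: "\<alpha> \<ge> 0" and b: "\<beta> > 0" and r: "r \<ge> 0"
    and ab: "\<forall>x>0. summable (\<lambda>i. \<bar>d i * x powr (-1 + \<alpha> * real i + \<beta>) / Gamma (real i * \<alpha> + \<beta>)\<bar>)"
    and nn: "\<forall>x\<ge>0. C * (\<Sum>i. d i * x powr (-1 + \<alpha> * real i + \<beta>) / Gamma (real i * \<alpha> + \<beta>)) \<ge> 0"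
    and dist: "distributed M lborel S
        (\<lambda>x. ennreal (if 0 \<le> x then C * (\<Sum>i. d i * x powr (-1 + \<alpha> * real i + \<beta>) / Gamma (real i * \<alpha> + \<beta>)) else 0))"
  shows "summable (\<lambda>i. d i * r powr (\<alpha> * real i + \<beta>) / Gamma (1 + real i * \<alpha> + \<beta>))"
    and "measure M {\<omega> \<in> space M. S \<omega> \<le> r} = C * (\<Sum>i. d i * r powr (\<alpha> * real i + \<beta>) / Gamma (1 + real i * \<alpha> + \<beta>))"
proof -
  define c where "c i = real i * \<alpha> + \<beta>" for i
  define f where "f x i = d i * x powr (-1 + \<alpha> * real i + \<beta>) / Gamma (real i * \<alpha> + \<beta>)" for x i
  define Fr where "Fr i = d i * r powr (\<alpha> * real i + \<beta>) / Gamma (1 + real i * \<alpha> + \<beta>)" for i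
  have cpos: "c i > 0" for i using a0 b by (simp add: c_def add_nonneg_pos)
  have Gc: "Gamma (c i) > 0" for i using cpos by (simp add: Gamma_real_pos)
  have e1: "-1 + \<alpha> * real i + \<beta> = c i - 1" for i by (simp add: c_def algebra_simps)
  have e2: "\<alpha> * real i + \<beta> = c i" for i by (simp add: c_def algebra_simps)
  have e3: "1 + real i * \<alpha> + \<beta> = c i + 1" for i by (simp add: c_def algebra_simps)
  have f_eq: "f x i = d i * x powr (c i - 1) / Gamma (c i)" for x i by (simp only: f_def e1) (simp add: c_def)
  have Fr_eq: "Fr i = d i * r powr (c i) / (c i * Gamma (c i))" for i
  proof -
    have "Fr i = d i * r powr (c i) / Gamma (c i + 1)" by (simp only: Fr_def e2 e3)
    also have "\<dots> = d i * r powr (c i) / (c i * Gamma (c i))" by (simp only: Gamma_plus1_pos[OF cpos])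
    finally show ?thesis .
  qed
  have f0: "f 0 i = 0" for i by (simp add: f_def)
  have f0': "f 0 = (\<lambda>_. 0)" by (simp add: fun_eq_iff f0)
  have sFr: "summable (\<lambda>i. \<bar>Fr i\<bar>)"
  proof (cases "r = 0")
    case True then show ?thesis by (simp add: Fr_eq cpos[THEN less_imp_neq, symmetric])
  next
    case False
    then have r0: "r > 0" using r by simp
    show ?thesis
    proof (rule summable_comparison_test')
      show "summable (\<lambda>i. \<bar>f r i\<bar> * (r / \<beta>))"
        using ab r0 by (intro summable_mult2) (simp add: f_def)
      fix i
      have cb: "c i \<ge> \<beta>" using a0 by (simp add: c_def)
      have rr: "r powr (c i) = r powr (c i - 1) * r" using r0 by (simp add: powr_diff)
      have "norm \<bar>Fr i\<bar> = \<bar>d i\<bar> * r powr (c i - 1) / Gamma (c i) * (r / c i)"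
        using Gc[of i] cpos[of i] r0 by (simp add: Fr_eq rr abs_mult mult_ac)
      also have "\<dots> \<le> \<bar>d i\<bar> * r powr (c i - 1) / Gamma (c i) * (r / \<beta>)"
        using Gc[of i] cpos[of i] cb b r0
        by (intro mult_left_mono divide_left_mono) (auto intro!: divide_nonneg_pos)
      also have "\<dots> = \<bar>f r i\<bar> * (r / \<beta>)"
        using Gc[of i] by (simp add: f_eq abs_mult)
      finally show "norm \<bar>Fr i\<bar> \<le> \<bar>f r i\<bar> * (r / \<beta>)" .
    qed
  qed
  then show "summable (\<lambda>i. d i * r powr (\<alpha> * real i + \<beta>) / Gamma (1 + real i * \<alpha> + \<beta>))"
    using summable_rabs_cancel by (auto simp: Fr_def[abs_def])
  define tf where "tf i x = C * f x i * indicator {0..r} x" for i x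
  define H where "H x = (if 0 \<le> x then C * suminf (f x) else 0) * indicator {0..r} x" for x
  have tf_eq: "tf i = (\<lambda>x. (C * d i / Gamma (c i)) * (x powr (c i - 1) * indicator {0..r} x))" for i
    by (auto simp: fun_eq_iff tf_def f_eq)
  have int_tf: "integrable lborel (tf i)" for i
    unfolding tf_eq by (intro integrable_mult_right powr_kernel(1)[OF cpos r])
  have I_tf: "integral\<^sup>L lborel (tf i) = C * Fr i" for i
    unfolding tf_eq using powr_kernel(2)[OF cpos r] Gc[of i] cpos[of i]
    by (simp add: Fr_eq field_simps)
  have I_atf: "integral\<^sup>L lborel (\<lambda>x. norm (tf i x)) = \<bar>C * Fr i\<bar>" for i
  proof -
    have "(\<lambda>x. norm (tf i x)) = (\<lambda>x. \<bar>C * d i / Gamma (c i)\<bar> * (x powr (c i - 1) * indicator {0..r} x))"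
      by (auto simp: fun_eq_iff tf_eq abs_mult indicator_def)
    then show ?thesis using powr_kernel(2)[OF cpos r] Gc[of i] cpos[of i]
      by (simp add: Fr_eq abs_mult abs_divide field_simps)
  qed
  have AEs: "AE x in lborel. summable (\<lambda>i. norm (tf i x))"
  proof (rule AE_I2)
    fix x :: real
    show "summable (\<lambda>i. norm (tf i x))"
    proof (cases "x \<in> {0<..r}")
      case True
      then have x0: "x > 0" by simp
      have "summable (\<lambda>i. \<bar>f x i\<bar>)" unfolding f_def using ab x0 by blast
      then have "summable (\<lambda>i. \<bar>C\<bar> * \<bar>f x i\<bar>)" by (rule summable_mult)
      then show ?thesis using True by (simp add: tf_def abs_mult)
    next
      case False
      then have "x \<notin> {0..r} \<or> x = 0" by auto
      then have "tf i x = 0" for i by (auto simp: tf_def f0)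
      then show ?thesis by simp
    qed
  qed
  have sI: "summable (\<lambda>i. integral\<^sup>L lborel (\<lambda>x. norm (tf i x)))"
    unfolding I_atf using summable_mult[OF sFr, of "\<bar>C\<bar>"] by (simp add: abs_mult)
  have H_eq: "H x = (\<Sum>i. tf i x)" for x
  proof (cases "x \<in> {0<..r}")
    case True
    then have x0: "x > 0" by simp
    have sa: "summable (\<lambda>i. \<bar>f x i\<bar>)" unfolding f_def using ab x0 by blast
    have sf: "summable (f x)" by (rule summable_rabs_cancel[OF sa])
    have "(\<Sum>i. tf i x) = (\<Sum>i. C * f x i)" using True by (simp add: tf_def)
    also have "\<dots> = C * suminf (f x)" by (rule suminf_mult[OF sf])
    also have "\<dots> = H x" using True by (simp add: H_def)
    finally show ?thesis by simp
  next
    case False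
    then have "x \<notin> {0..r} \<or> x = 0" by auto
    then have "tf i x = 0" for i by (auto simp: tf_def f0)
    moreover have "H x = 0" using False by (auto simp: H_def f0')
    ultimately show ?thesis by simp
  qed
  have intH: "integrable lborel H"
    unfolding H_eq[abs_def] by (rule integrable_suminf[OF int_tf AEs sI])
  have IH: "integral\<^sup>L lborel H = C * suminf Fr"
  proof -
    have "integral\<^sup>L lborel H = (\<Sum>i. integral\<^sup>L lborel (tf i))"
      unfolding H_eq[abs_def] by (rule integral_suminf[OF int_tf AEs sI])
    also have "\<dots> = C * suminf Fr"
      unfolding I_tf using summable_rabs_cancel[OF sFr] by (rule suminf_mult)
    finally show ?thesis .
  qed
  have Hnn: "H x \<ge> 0" for x
    using nn by (auto simp: H_def f_def[abs_def] indicator_def)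
  have meas: "S \<in> borel_measurable M"
    using distributed_measurable[OF dist] by simp
  have "emeasure M (S -` {..r} \<inter> space M) =
      (\<integral>\<^sup>+x. ennreal (if 0 \<le> x then C * (\<Sum>i. d i * x powr (-1 + \<alpha> * real i + \<beta>) / Gamma (real i * \<alpha> + \<beta>)) else 0) * indicator {..r} x \<partial>lborel)"
    using distributed_emeasure[OF dist, of "{..r}"] by simp
  also have "\<dots> = (\<integral>\<^sup>+x. ennreal (H x) \<partial>lborel)"
  proof (intro nn_integral_cong)
    fix x :: real
    have "suminf (f x) = (\<Sum>i. d i * x powr (-1 + \<alpha> * real i + \<beta>) / Gamma (real i * \<alpha> + \<beta>))"
      unfolding f_def ..
    then show "ennreal (if 0 \<le> x then C * (\<Sum>i. d i * x powr (-1 + \<alpha> * real i + \<beta>) / Gamma (real i * \<alpha> + \<beta>)) else 0) * indicator {..r} x = ennreal (H x)"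
      by (auto simp: H_def indicator_def)
  qed
  also have "\<dots> = ennreal (integral\<^sup>L lborel H)"
    using intH Hnn by (intro nn_integral_eq_integral) auto
  finally have em: "emeasure M (S -` {..r} \<inter> space M) = ennreal (C * suminf Fr)" by (simp add: IH)
  have set_eq: "{\<omega> \<in> space M. S \<omega> \<le> r} = S -` {..r} \<inter> space M" by auto
  have "C * suminf Fr \<ge> 0" using IH Hnn integral_nonneg_AE[of H lborel] by simp
  then show "measure M {\<omega> \<in> space M. S \<omega> \<le> r} = C * (\<Sum>i. d i * r powr (\<alpha> * real i + \<beta>) / Gamma (1 + real i * \<alpha> + \<beta>))"
    unfolding set_eq measure_def em by (simp add: Fr_def[abs_def])
qed

lemma fps_const_prod_real:
  fixes f :: "nat \<Rightarrow> real"
  assumes "finite A"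
  shows "(\<Prod>l\<in>A. fps_const (f l)) = fps_const (\<Prod>l\<in>A. f l)"
  using assms by (induction A rule: finite_induct) (auto simp: fps_const_mult)

lemma pdf_l_zero: "pdf_l \<alpha> T rh ph 0 = 0"
  by (simp add: pdf_l_def)

theorem proposition2:
  fixes M :: "'a measure"
    and L :: nat
    and \<alpha> :: real
    and T rh :: "nat \<Rightarrow> real"
    and ph :: "nat \<Rightarrow> nat \<Rightarrow> real"   (* ph i l = varphi_{i,l} *)
    and R :: "nat \<Rightarrow> 'a \<Rightarrow> real"
  assumes "prob_space M"
    and "L \<ge> 1"
    and "\<alpha> > 0"
    and "\<forall>l\<in>{1..L}. T l > 0 \<and> rh l > 0"
    and "\<forall>l\<in>{1..L}. \<forall>r\<ge>0. summable (\<lambda>i. \<bar>ph i l * r powr (\<alpha> * (real i + T l) - 1) /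
                (rh l powr (\<alpha> * (real i + T l)) * Gamma (real i + T l))\<bar>)"
    and "\<forall>l\<in>{1..L}. \<forall>r\<ge>0. pdf_l \<alpha> (T l) (rh l) (\<lambda>i. ph i l) r \<ge> 0"
    and "\<forall>l\<in>{1..L}. distributed M lborel (R l)
            (\<lambda>r. ennreal (if 0 \<le> r then pdf_l \<alpha> (T l) (rh l) (\<lambda>i. ph i l) r else 0))"
    and "prob_space.indep_vars M (\<lambda>_. borel) R {1..L}"
    and "\<forall>l\<in>{1..L}. lam_coef \<alpha> (T l) (rh l) (\<lambda>i. ph i l) 0 \<noteq> 0"
  shows
    "let lam = (\<lambda>i l. lam_coef \<alpha> (T l) (rh l) (\<lambda>j. ph j l) i);
         \<delta> = delta_coef (\<Prod>l=1..L. lam 0 l)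
               (\<lambda>h. \<Sum>l=1..L. phi_coef (\<lambda>i. lam i l) h);
         Ts = (\<Sum>l=1..L. T l);
         C = \<alpha> ^ L * (\<Prod>l=1..L. rh l powr (- \<alpha> * T l));
         fterm = (\<lambda>r i. \<delta> i * r powr (-1 + \<alpha> * real i + \<alpha> * Ts) / Gamma (real i * \<alpha> + \<alpha> * Ts));
         Fterm = (\<lambda>r i. \<delta> i * r powr (\<alpha> * real i + \<alpha> * Ts) / Gamma (1 + real i * \<alpha> + \<alpha> * Ts))
     in (\<forall>r\<ge>0. summable (fterm r) \<and> summable (Fterm r))
        \<and> distributed M lborel (\<lambda>\<omega>. \<Sum>l=1..L. R l \<omega>)
            (\<lambda>r. ennreal (if 0 \<le> r then C * (\<Sum>i. fterm r i) else 0))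
        \<and> (\<forall>r\<ge>0. measure M {\<omega> \<in> space M. (\<Sum>l=1..L. R l \<omega>) \<le> r} = C * (\<Sum>i. Fterm r i))"
proof -
  interpret P: prob_space M by (rule assms(1))
  have apos: "\<alpha> > 0" and a0: "\<alpha> \<ge> 0" using assms(3) by auto
  define lam where "lam = (\<lambda>i l. lam_coef \<alpha> (T l) (rh l) (\<lambda>j. ph j l) i)"
  define \<delta> where "\<delta> = delta_coef (\<Prod>l=1..L. lam 0 l) (\<lambda>h. \<Sum>l=1..L. phi_coef (\<lambda>i. lam i l) h)"
  define Ts where "Ts = (\<Sum>l=1..L. T l)"
  define C where "C = \<alpha> ^ L * (\<Prod>l=1..L. rh l powr (- \<alpha> * T l))"
  define fterm where "fterm = (\<lambda>r i. \<delta> i * r powr (-1 + \<alpha> * real i + \<alpha> * Ts) / Gamma (real i * \<alpha> + \<alpha> * Ts))"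
  define Fterm where "Fterm = (\<lambda>r i. \<delta> i * r powr (\<alpha> * real i + \<alpha> * Ts) / Gamma (1 + real i * \<alpha> + \<alpha> * Ts))"
  define kap where "kap l = \<alpha> * rh l powr (- \<alpha> * T l)" for l
  define a where "a l = (\<lambda>i. \<alpha> * rh l powr (- \<alpha> * T l) * lam_coef \<alpha> (T l) (rh l) (\<lambda>j. ph j l) i)" for l
  define s where "s l = \<alpha> * T l" for l

  have per_l: "s l > 0 \<and> Pabs \<alpha> (a l) (s l) \<and> (\<forall>r\<ge>0. pdf_l \<alpha> (T l) (rh l) (\<lambda>i. ph i l) r = Gs \<alpha> (a l) (s l) r)"
    if l: "l \<in> {1..L}" for l
  proof -
    have T: "T l > 0" and rh: "rh l > 0" using assms(4) l by auto
    have S: "summable (\<lambda>i. \<bar>ph i l * r powr (\<alpha> * (real i + T l) - 1) /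
                (rh l powr (\<alpha> * (real i + T l)) * Gamma (real i + T l))\<bar>)" if "r > 0" for r
      using assms(5) l that by auto
    have "s l > 0" using apos T by (simp add: s_def)
    moreover have "Pabs \<alpha> (a l) (s l)"
      unfolding Pabs_def a_def s_def using pdf_series(2)[OF apos T rh _ S] by blast
    moreover have "\<forall>r\<ge>0. pdf_l \<alpha> (T l) (rh l) (\<lambda>i. ph i l) r = Gs \<alpha> (a l) (s l) r"
    proof (intro allI impI)
      fix r :: real assume "r \<ge> 0"
      then consider "r = 0" | "r > 0" by linarith
      then show "pdf_l \<alpha> (T l) (rh l) (\<lambda>i. ph i l) r = Gs \<alpha> (a l) (s l) r"
      proof cases
        case 1 then show ?thesis by (simp add: pdf_l_zero)
      next
        case 2 then show ?thesis
          unfolding a_def s_def using pdf_series(1)[OF apos T rh 2 S[OF 2]] by simp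
      qed
    qed
    ultimately show ?thesis by blast
  qed
  have D: "\<forall>l\<in>{1..L}. distributed M lborel (R l) (\<lambda>r. ennreal (if 0 \<le> r then Gs \<alpha> (a l) (s l) r else 0))"
  proof
    fix l assume l: "l \<in> {1..L}"
    have "(\<lambda>r. ennreal (if 0 \<le> r then pdf_l \<alpha> (T l) (rh l) (\<lambda>i. ph i l) r else 0))
        = (\<lambda>r. ennreal (if 0 \<le> r then Gs \<alpha> (a l) (s l) r else 0))"
      using per_l[OF l] by (auto simp: fun_eq_iff)
    then show "distributed M lborel (R l) (\<lambda>r. ennreal (if 0 \<le> r then Gs \<alpha> (a l) (s l) r else 0))"
      using assms(7) l by metis
  qed
  have N: "\<forall>l\<in>{1..L}. \<forall>r\<ge>0. Gs \<alpha> (a l) (s l) r \<ge> 0"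
    using per_l assms(6) by metis
  have SP: "\<forall>l\<in>{1..L}. s l > 0" and PP: "\<forall>l\<in>{1..L}. Pabs \<alpha> (a l) (s l)"
    using per_l by auto
  define cf where "cf = fps_nth (\<Prod>l=1..L. Abs_fps (a l))"
  define sT where "sT = (\<Sum>l=1..L. s l)"
  have main: "distributed M lborel (\<lambda>\<omega>. \<Sum>l=1..L. R l \<omega>) (\<lambda>r. ennreal (if 0 \<le> r then Gs \<alpha> cf sT r else 0))
    \<and> (\<forall>r\<ge>0. Gs \<alpha> cf sT r \<ge> 0) \<and> Pabs \<alpha> cf sT \<and> sT > 0"
    unfolding cf_def sT_def using P.sum_dist[OF a0 SP PP D N assms(8) assms(2) order_refl] .
  have sT_eq: "sT = \<alpha> * Ts" by (simp add: sT_def s_def Ts_def sum_distrib_left)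

  define Dp where "Dp = (\<Prod>l=1..L. Abs_fps (\<lambda>i. lam i l))"
  define Sp where "Sp = (\<Sum>l=1..L. Abs_fps (phi_coef (\<lambda>i. lam i l)))"
  have dD: "fps_deriv Dp = Dp * Sp"
    unfolding Dp_def Sp_def
  proof (rule deriv_prod_fps)
    show "\<forall>l\<in>{1..L}. fps_deriv (Abs_fps (\<lambda>i. lam i l)) = Abs_fps (\<lambda>i. lam i l) * Abs_fps (phi_coef (\<lambda>i. lam i l))"
      using assms(9) by (auto intro!: phi_fps simp: lam_def)
  qed simp
  have D0: "fps_nth Dp 0 = (\<Prod>l=1..L. lam 0 l)"
    unfolding Dp_def by (simp add: prod_fps_nth0 Abs_fps_inverse)
  have SS: "(\<lambda>h. fps_nth Sp h) = (\<lambda>h. \<Sum>l=1..L. phi_coef (\<lambda>i. lam i l) h)"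
    unfolding Sp_def by (simp add: fps_sum_nth Abs_fps_inverse)
  have Dd: "fps_nth Dp i = \<delta> i" for i
    using delta_fps[OF dD, of i] unfolding D0 SS \<delta>_def .
  have Aa: "Abs_fps (a l) = fps_const (kap l) * Abs_fps (\<lambda>i. lam i l)" for l
    by (simp add: fps_eq_iff a_def kap_def lam_def Abs_fps_inverse)
  have kC: "(\<Prod>l=1..L. kap l) = C"
    by (simp add: kap_def C_def prod.distrib)
  have cfd: "cf i = C * \<delta> i" for i
  proof -
    have "(\<Prod>l=1..L. Abs_fps (a l)) = fps_const (\<Prod>l=1..L. kap l) * Dp"
      unfolding Aa Dp_def prod.distrib fps_const_prod_real[OF finite_atLeastAtMost] ..
    then have "cf i = (\<Prod>l=1..L. kap l) * fps_nth Dp i" unfolding cf_def by simp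
    then show ?thesis unfolding kC Dd .
  qed
  have Cpos: "C > 0"
    unfolding C_def using apos assms(4) by (intro mult_pos_pos prod_pos) force+
  have gt: "gterm \<alpha> cf sT r i = C * fterm r i" for r i
  proof -
    have e1: "\<alpha> * real i + \<alpha> * Ts - 1 = -1 + \<alpha> * real i + \<alpha> * Ts" by simp
    have e2: "\<alpha> * real i + \<alpha> * Ts = real i * \<alpha> + \<alpha> * Ts" by simp
    show ?thesis unfolding gterm_def fterm_def sT_eq cfd e1 by (simp only: e2 mult.assoc times_divide_eq_right)
  qed
  have ab: "\<forall>x>0. summable (\<lambda>i. \<bar>fterm x i\<bar>)"
  proof (intro allI impI)
    fix x :: real assume "x > 0"
    then have "summable (\<lambda>i. \<bar>gterm \<alpha> cf sT x i\<bar>)" using main by (auto simp: Pabs_def)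
    then have "summable (\<lambda>i. \<bar>C\<bar> * \<bar>fterm x i\<bar>)" by (simp add: gt abs_mult)
    then show "summable (\<lambda>i. \<bar>fterm x i\<bar>)" using Cpos by (simp add: summable_cmult_iff)
  qed
  have sf: "summable (fterm r)" if "r \<ge> 0" for r
  proof (cases "r = 0")
    case True
    then have "fterm r = (\<lambda>_. 0)" by (simp add: fterm_def fun_eq_iff)
    then show ?thesis by simp
  next
    case False
    then show ?thesis using ab that summable_rabs_cancel by auto
  qed
  have Geq: "Gs \<alpha> cf sT r = C * (\<Sum>i. fterm r i)" if "r \<ge> 0" for r
    unfolding Gs_def gt using suminf_mult[OF sf[OF that]] by simp
  have dist': "distributed M lborel (\<lambda>\<omega>. \<Sum>l=1..L. R l \<omega>) (\<lambda>r. ennreal (if 0 \<le> r then C * (\<Sum>i. fterm r i) else 0))"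
  proof -
    have "(\<lambda>r. ennreal (if 0 \<le> r then Gs \<alpha> cf sT r else 0)) = (\<lambda>r. ennreal (if 0 \<le> r then C * (\<Sum>i. fterm r i) else 0))"
      using Geq by (auto simp: fun_eq_iff)
    then show ?thesis using main by metis
  qed
  have nn: "\<forall>x\<ge>0. C * (\<Sum>i. fterm x i) \<ge> 0" using main Geq by metis
  have Tspos: "Ts > 0"
    unfolding Ts_def using assms(4) assms(2) by (intro sum_pos) auto
  have bpos: "\<alpha> * Ts > 0" using apos Tspos by simp
  have cdf: "summable (Fterm r) \<and> measure M {\<omega> \<in> space M. (\<Sum>l=1..L. R l \<omega>) \<le> r} = C * (\<Sum>i. Fterm r i)"
    if r: "r \<ge> 0" for r
    using P.cdf_series[OF a0 bpos r, of \<delta> C "\<lambda>\<omega>. \<Sum>l=1..L. R l \<omega>"] ab nn dist'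
    unfolding fterm_def Fterm_def by auto
  have final: "(\<forall>r\<ge>0. summable (fterm r) \<and> summable (Fterm r))
        \<and> distributed M lborel (\<lambda>\<omega>. \<Sum>l=1..L. R l \<omega>)
            (\<lambda>r. ennreal (if 0 \<le> r then C * (\<Sum>i. fterm r i) else 0))
        \<and> (\<forall>r\<ge>0. measure M {\<omega> \<in> space M. (\<Sum>l=1..L. R l \<omega>) \<le> r} = C * (\<Sum>i. Fterm r i))"
    using sf cdf dist' by auto
  show ?thesis
    using final unfolding Let_def lam_def \<delta>_def Ts_def C_def fterm_def Fterm_def .
qed

end
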